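(* Let $a>0$ and $p\in(2,+\infty)$. Let $x\in C^0(\mathbb{R}_+\times[0,1])\cap C^{1,2}((0,\infty)\times(0,1))$, with $x[t]:=x(t,\cdot)\in C^2([0,1])$ for all $t\ge0$, be a classical solution of $\partial_tx(t,z)=a\,\partial_z^2x(t,z)$ on $(0,\infty)\times(0,1)$ with $x(t,0)=x(t,1)=0$ for $t\ge0$ and $x(0,\cdot)=x_0\in C^2([0,1])$. Then for all $t\ge0$, $\|x[t]\|_p\le e^{-a(p-1)\frac{4\pi^2}{p^2}t}\|x_0\|_p$, where $\|g\|_p=\left(\int_0^1|g(z)|^pdz\right)^{1/p}$. *)

theory Defs
  imports "HOL-Analysis.Analysis"
begin

definition C2_on :: "real set \<Rightarrow> (real \<Rightarrow> real) \<Rightarrow> bool" where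
  "C2_on S f \<longleftrightarrow> (\<exists>f' f''.
      (\<forall>z\<in>S. (f has_real_derivative f' z) (at z within S)
             \<and> (f' has_real_derivative f'' z) (at z within S))
      \<and> continuous_on S f'')"

definition lp_norm :: "real \<Rightarrow> (real \<Rightarrow> real) \<Rightarrow> real" where
  "lp_norm p g = (integral {0..1} (\<lambda>z. \<bar>g z\<bar> powr p)) powr (1 / p)"

end

theory Submission
  imports Defs
begin


lemma sphi_deriv:
  fixes q u :: real
  assumes q: "q > 0"
  shows "((\<lambda>v. \<bar>v\<bar> powr q * v) has_real_derivative (q + 1) * \<bar>u\<bar> powr q) (at u)"
proof -
  consider "u > 0" | "u < 0" | "u = 0" by linarith
  then show ?thesis
  proof cases
    case 1
    have ev: "eventually (\<lambda>v. \<bar>v\<bar> powr q * v = v powr (q + 1)) (nhds u)"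
    proof -
      have "eventually (\<lambda>v. v > 0) (nhds u)" using eventually_nhds_in_open[of "{0<..}" u] 1 by simp
      then show ?thesis by eventually_elim (simp add: powr_add)
    qed
    have "((\<lambda>v. v powr (q + 1)) has_real_derivative (q + 1) * u powr (q + 1 - 1)) (at u)"
      using 1 by (rule has_real_derivative_powr)
    then show ?thesis using 1 by (subst DERIV_cong_ev[OF refl ev refl]) simp
  next
    case 2
    have ev: "eventually (\<lambda>v. \<bar>v\<bar> powr q * v = - ((- v) powr (q + 1))) (nhds u)"
    proof -
      have "eventually (\<lambda>v. v < 0) (nhds u)" using eventually_nhds_in_open[of "{..<0}" u] 2 by simp
      then show ?thesis by eventually_elim (simp add: powr_add)
    qed
    have "((\<lambda>v. - ((- v) powr (q + 1))) has_real_derivative - ((q + 1) * (- u) powr (q + 1 - 1) * (- 1))) (at u)"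
      using 2 by (auto intro!: derivative_eq_intros)
    then show ?thesis using 2 by (subst DERIV_cong_ev[OF refl ev refl]) simp
  next
    case 3
    have "((\<lambda>v. \<bar>v\<bar> powr q) \<longlongrightarrow> 0) (at 0)"
      using q by (intro tendsto_zero_powrI) (auto intro!: tendsto_eq_intros)
    then have "((\<lambda>v. (\<bar>v\<bar> powr q * v - \<bar>0\<bar> powr q * 0) / (v - 0)) \<longlongrightarrow> 0) (at (0::real))"
      by (rule Lim_transform_eventually) (auto simp: eventually_at_filter)
    then show ?thesis using 3 q by (simp add: has_field_derivative_iff)
  qed
qed



lemma pow_deriv:
  fixes p u :: real
  assumes p: "p > 2"
  shows "((\<lambda>v. \<bar>v\<bar> powr p) has_real_derivative p * (\<bar>u\<bar> powr (p - 2) * u)) (at u)"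
proof -
  have eq: "\<And>v::real. \<bar>v\<bar> powr p = (\<bar>v\<bar> powr (p - 2) * v) * v"
  proof -
    fix v :: real
    have "\<bar>v\<bar> powr 2 = v * v"
      by (cases "v = 0") (simp_all add: powr_numeral power2_eq_square[symmetric])
    then have "\<bar>v\<bar> powr (p - 2) * v * v = \<bar>v\<bar> powr (p - 2) * \<bar>v\<bar> powr 2"
      by simp
    also have "\<dots> = \<bar>v\<bar> powr p" by (simp only: powr_add[symmetric]) simp
    finally show "\<bar>v\<bar> powr p = (\<bar>v\<bar> powr (p - 2) * v) * v" by simp
  qed
  have "((\<lambda>v. (\<bar>v\<bar> powr (p - 2) * v) * v) has_real_derivative
          ((p - 2 + 1) * \<bar>u\<bar> powr (p - 2)) * u + (\<bar>u\<bar> powr (p - 2) * u) * 1) (at u)"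
    using DERIV_mult'[OF sphi_deriv[of "p-2" u] DERIV_ident] p by (simp add: add.commute)
  then show ?thesis unfolding eq[abs_def] by (simp add: algebra_simps)
qed

locale heat =
  fixes a p :: real and x xt xz xzz :: "real \<Rightarrow> real \<Rightarrow> real"
  assumes a_pos: "a > 0"
    and p_gt: "p > 2"
    and cont: "continuous_on ({0..} \<times> {0..1}) (\<lambda>(t, z). x t z)"
    and d_t: "\<And>t z. t > 0 \<Longrightarrow> 0 < z \<Longrightarrow> z < 1 \<Longrightarrow>
                 ((\<lambda>s. x s z) has_real_derivative xt t z) (at t)"
    and d_z: "\<And>t z. t > 0 \<Longrightarrow> 0 < z \<Longrightarrow> z < 1 \<Longrightarrow>
                 ((\<lambda>w. x t w) has_real_derivative xz t z) (at z)"
    and d_zz: "\<And>t z. t > 0 \<Longrightarrow> 0 < z \<Longrightarrow> z < 1 \<Longrightarrow>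
                 ((\<lambda>w. xz t w) has_real_derivative xzz t z) (at z)"
    and cont_t: "continuous_on ({0<..} \<times> {0<..<1}) (\<lambda>(t, z). xt t z)"
    and cont_zz: "continuous_on ({0<..} \<times> {0<..<1}) (\<lambda>(t, z). xzz t z)"
    and pde: "\<And>t z. t > 0 \<Longrightarrow> 0 < z \<Longrightarrow> z < 1 \<Longrightarrow> xt t z = a * xzz t z"
    and bc: "\<And>t. t \<ge> 0 \<Longrightarrow> x t 0 = 0 \<and> x t 1 = 0"
begin

lemma cont_x: "S \<subseteq> {0..} \<times> {0..1} \<Longrightarrow> continuous_on S (\<lambda>w. x (fst w) (snd w))"
  using continuous_on_subset[OF cont] by (simp add: split_beta)

lemma cont_xt: "S \<subseteq> {0<..} \<times> {0<..<1} \<Longrightarrow> continuous_on S (\<lambda>w. xt (fst w) (snd w))"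
  using continuous_on_subset[OF cont_t] by (simp add: split_beta)

lemma cont_xzz: "S \<subseteq> {0<..} \<times> {0<..<1} \<Longrightarrow> continuous_on S (\<lambda>w. xzz (fst w) (snd w))"
  using continuous_on_subset[OF cont_zz] by (simp add: split_beta)

lemma cont_pow: "S \<subseteq> {0..} \<times> {0..1} \<Longrightarrow> r > 0 \<Longrightarrow>
   continuous_on S (\<lambda>w. \<bar>x (fst w) (snd w)\<bar> powr r)"
  by (intro continuous_on_powr' continuous_intros cont_x) auto

lemma slice_cont: "s \<ge> 0 \<Longrightarrow> T \<subseteq> {0..1} \<Longrightarrow> continuous_on T (x s)"
proof -
  assume "s \<ge> 0" "T \<subseteq> {0..1}"
  then have "continuous_on ((\<lambda>z. (s, z)) ` T) (\<lambda>w. x (fst w) (snd w))"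
    by (intro cont_x) auto
  then have "continuous_on T ((\<lambda>w. x (fst w) (snd w)) \<circ> (\<lambda>z. (s, z)))"
    by (intro continuous_on_compose continuous_intros)
  then show ?thesis by (simp add: o_def)
qed

lemma time_deriv:
  assumes cd: "0 < c" "c \<le> d" "d < 1" and s: "s > 0"
  shows "((\<lambda>s. integral {c..d} (\<lambda>z. (A + B*z) * \<bar>x s z\<bar> powr p)) has_real_derivative
          integral {c..d} (\<lambda>z. (A + B*z) * (p * (\<bar>x s z\<bar> powr (p-2) * x s z) * xt s z))) (at s)"
proof -
  let ?U = "{s/2<..}"
  have "((\<lambda>s. integral (cbox c d) (\<lambda>z. (A + B*z) * \<bar>x s z\<bar> powr p)) has_real_derivative
          integral (cbox c d) (\<lambda>z. (A + B*z) * (p * (\<bar>x s z\<bar> powr (p-2) * x s z) * xt s z))) (at s within ?U)"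
  proof (rule leibniz_rule_field_derivative)
    fix s' z assume s': "s' \<in> ?U" and z: "z \<in> cbox c d"
    then have "s' > 0" "0 < z" "z < 1" using s cd by auto
    then have "((\<lambda>s. \<bar>x s z\<bar> powr p) has_real_derivative p * (\<bar>x s' z\<bar> powr (p - 2) * x s' z) * xt s' z) (at s')"
      using DERIV_chain2[OF pow_deriv[OF p_gt] d_t] by simp
    then have "((\<lambda>s. (A + B*z) * \<bar>x s z\<bar> powr p) has_real_derivative (A + B*z) * (p * (\<bar>x s' z\<bar> powr (p - 2) * x s' z) * xt s' z)) (at s')"
      by (rule DERIV_cmult)
    then show "((\<lambda>s. (A + B*z) * \<bar>x s z\<bar> powr p) has_real_derivative (A + B*z) * (p * (\<bar>x s' z\<bar> powr (p - 2) * x s' z) * xt s' z)) (at s' within ?U)"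
      by (rule has_field_derivative_at_within)
  next
    fix s' assume "s' \<in> ?U"
    then have "s' \<ge> 0" using s by auto
    have "continuous_on (cbox c d) (\<lambda>z. (A + B*z) * \<bar>x s' z\<bar> powr p)"
      using cd p_gt \<open>s' \<ge> 0\<close>
      by (auto intro!: continuous_intros continuous_on_powr' slice_cont)
    then show "(\<lambda>z. (A + B*z) * \<bar>x s' z\<bar> powr p) integrable_on cbox c d"
      by (rule integrable_continuous)
  next
    have sub1: "?U \<times> cbox c d \<subseteq> {0..} \<times> {0..1}" and sub2: "?U \<times> cbox c d \<subseteq> {0<..} \<times> {0<..<1}"
      using s cd by auto
    have "continuous_on (?U \<times> cbox c d) (\<lambda>w. (A + B * snd w) * (p * (\<bar>x (fst w) (snd w)\<bar> powr (p - 2) * x (fst w) (snd w)) * xt (fst w) (snd w)))"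
      using p_gt by (intro continuous_intros cont_pow[OF sub1] cont_x[OF sub1] cont_xt[OF sub2]) auto
    then show "continuous_on (?U \<times> cbox c d) (\<lambda>(s, z). (A + B * z) * (p * (\<bar>x s z\<bar> powr (p - 2) * x s z) * xt s z))"
      by (simp add: split_beta)
  qed (use s in auto)
  then show ?thesis
    using s by (subst (asm) at_within_open) auto
qed

end

context heat begin

lemma xz_cont: "s > 0 \<Longrightarrow> 0 < c \<Longrightarrow> d < 1 \<Longrightarrow> continuous_on {c..d} (xz s)"
proof -
  assume s: "s > 0" "0 < c" "d < 1"
  show ?thesis
  proof (rule continuous_at_imp_continuous_on, rule ballI)
    fix z assume "z \<in> {c..d}"
    then show "isCont (xz s) z" using s by (intro DERIV_isCont[OF d_zz]) auto
  qed
qed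

lemma xzz_cont: "s > 0 \<Longrightarrow> 0 < c \<Longrightarrow> d < 1 \<Longrightarrow> continuous_on {c..d} (xzz s)"
proof -
  assume s: "s > 0" "0 < c" "d < 1"
  then have "continuous_on ((\<lambda>z. (s, z)) ` {c..d}) (\<lambda>w. xzz (fst w) (snd w))"
    by (intro cont_xzz) auto
  then have "continuous_on {c..d} ((\<lambda>w. xzz (fst w) (snd w)) \<circ> (\<lambda>z. (s, z)))"
    by (intro continuous_on_compose continuous_intros)
  then show ?thesis by (simp add: o_def)
qed

lemma space_ibp:
  assumes cd: "0 < c" "c \<le> d" "d < 1" and s: "s > 0"
  shows "integral {c..d} (\<lambda>z. (A+B*z) * (p*(\<bar>x s z\<bar> powr (p-2) * x s z) * xzz s z))
       = ((A+B*d) * (p*(\<bar>x s d\<bar> powr (p-2) * x s d) * xz s d) - B * \<bar>x s d\<bar> powr p)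
         - ((A+B*c) * (p*(\<bar>x s c\<bar> powr (p-2) * x s c) * xz s c) - B * \<bar>x s c\<bar> powr p)
         - integral {c..d} (\<lambda>z. (A+B*z) * (p*(p-1)*\<bar>x s z\<bar> powr (p-2) * (xz s z)^2))"
proof -
  define g1 where "g1 z = (A+B*z) * (p*(\<bar>x s z\<bar> powr (p-2) * x s z) * xzz s z)" for z
  define g2 where "g2 z = (A+B*z) * (p*(p-1)*\<bar>x s z\<bar> powr (p-2) * (xz s z)^2)" for z
  define \<Phi> where "\<Phi> z = (A+B*z) * (p*(\<bar>x s z\<bar> powr (p-2) * x s z) * xz s z) - B * \<bar>x s z\<bar> powr p" for z
  have der: "(\<Phi> has_real_derivative g1 z + g2 z) (at z)" if z: "0 < z" "z < 1" for z
  proof -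
    have h1: "((\<lambda>w. \<bar>x s w\<bar> powr (p-2) * x s w) has_real_derivative ((p-2)+1)*\<bar>x s z\<bar> powr (p-2) * xz s z) (at z)"
      using DERIV_chain2[OF sphi_deriv[of "p-2"] d_z[OF s z]] p_gt by simp
    have h2: "((\<lambda>w. \<bar>x s w\<bar> powr p) has_real_derivative p*(\<bar>x s z\<bar> powr (p-2) * x s z) * xz s z) (at z)"
      using DERIV_chain2[OF pow_deriv[OF p_gt] d_z[OF s z]] by simp
    have h3: "((\<lambda>w. A + B*w) has_real_derivative B) (at z)"
      by (auto intro!: derivative_eq_intros)
    have h4: "((\<lambda>w. p*(\<bar>x s w\<bar> powr (p-2) * x s w) * xz s w) has_real_derivative
        p*(((p-2)+1)*\<bar>x s z\<bar> powr (p-2) * xz s z) * xz s z + p*(\<bar>x s z\<bar> powr (p-2) * x s z) * xzz s z) (at z)"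
      using DERIV_mult'[OF DERIV_cmult[OF h1, of p] d_zz[OF s z]] by (simp add: add.commute)
    show ?thesis unfolding \<Phi>_def[abs_def]
      by (rule DERIV_cong[OF DERIV_diff[OF DERIV_mult'[OF h3 h4] DERIV_cmult[OF h2]]])
        (simp add: g1_def g2_def algebra_simps power2_eq_square)
  qed
  have ftc: "((\<lambda>z. g1 z + g2 z) has_integral (\<Phi> d - \<Phi> c)) {c..d}"
  proof (rule fundamental_theorem_of_calculus[OF cd(2)])
    fix z assume "z \<in> {c..d}"
    then have "0 < z" "z < 1" using cd by auto
    then show "(\<Phi> has_vector_derivative g1 z + g2 z) (at z within {c..d})"
      using der has_real_derivative_iff_has_vector_derivative has_vector_derivative_at_within by blast
  qed
  have "continuous_on {c..d} g2"
    unfolding g2_def[abs_def] using cd s p_gt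
    by (auto intro!: continuous_intros continuous_on_powr' slice_cont xz_cont)
  then have "(g2 has_integral integral {c..d} g2) {c..d}"
    by (simp add: integrable_continuous_interval integrable_integral)
  from has_integral_diff[OF ftc this] have "(g1 has_integral (\<Phi> d - \<Phi> c - integral {c..d} g2)) {c..d}"
    by simp
  then show ?thesis
    by (simp add: integral_unique g1_def[abs_def] g2_def[abs_def] \<Phi>_def)
qed

end


lemma pw_eq: "\<bar>v::real\<bar> powr p = \<bar>v\<bar> powr (p - 2) * v^2"
proof -
  have "\<bar>v\<bar> powr 2 = v^2"
    by (cases "v = 0") (simp_all add: powr_numeral)
  then have "\<bar>v\<bar> powr (p - 2) * v^2 = \<bar>v\<bar> powr (p - 2) * \<bar>v\<bar> powr 2" by simp
  also have "\<dots> = \<bar>v\<bar> powr p" by (simp only: powr_add[symmetric]) simp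
  finally show ?thesis by simp
qed

lemma pointwise_wirt:
  fixes p w y y' h k :: real
  assumes p: "p > 2" and w: "w \<ge> 0"
  shows "p*(p-1)*w*y'^2 \<ge> (4*(p-1)/p)*k^2*(w*y^2) + (4*(p-1)/p)*((-(k^2) - h^2)*(w*y^2) + h*(p*(w*y)*y'))"
proof -
  have eq: "p*(p-1)*w*y'^2 - ((4*(p-1)/p)*k^2*(w*y^2) + (4*(p-1)/p)*((-(k^2) - h^2)*(w*y^2) + h*(p*(w*y)*y')))
      = (p-1)/p * w * (p*y' - 2*h*y)^2"
    using p by (simp add: field_simps power2_eq_square)
  have "(p-1)/p * w * (p*y' - 2*h*y)^2 \<ge> 0" using p w by simp
  with eq show ?thesis by linarith
qed

context heat begin

lemma wirt:
  assumes cd: "0 < c" "c \<le> d" "d < 1" and s: "s > 0"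
    and hder: "\<And>z. z \<in> {c..d} \<Longrightarrow> (h has_real_derivative (-(k^2) - (h z)^2)) (at z)"
  shows "integral {c..d} (\<lambda>z. p*(p-1)*\<bar>x s z\<bar> powr (p-2) * (xz s z)^2)
     \<ge> (4*(p-1)/p)*k^2*integral {c..d} (\<lambda>z. \<bar>x s z\<bar> powr p)
       + (4*(p-1)/p)*(h d * \<bar>x s d\<bar> powr p - h c * \<bar>x s c\<bar> powr p)"
proof -
  define \<kappa> where "\<kappa> = 4*(p-1)/p"
  define \<Psi> where "\<Psi> z = h z * \<bar>x s z\<bar> powr p" for z
  define \<Psi>' where "\<Psi>' z = (-(k^2) - (h z)^2) * \<bar>x s z\<bar> powr p + h z * (p*(\<bar>x s z\<bar> powr (p-2) * x s z) * xz s z)" for z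
  have ftc: "(\<Psi>' has_integral (\<Psi> d - \<Psi> c)) {c..d}"
  proof (rule fundamental_theorem_of_calculus[OF cd(2)])
    fix z assume z: "z \<in> {c..d}"
    then have z01: "0 < z" "z < 1" using cd by auto
    have h2: "((\<lambda>w. \<bar>x s w\<bar> powr p) has_real_derivative p*(\<bar>x s z\<bar> powr (p-2) * x s z) * xz s z) (at z)"
      using DERIV_chain2[OF pow_deriv[OF p_gt] d_z[OF s z01]] by simp
    have "(\<Psi> has_real_derivative \<Psi>' z) (at z)"
      unfolding \<Psi>_def[abs_def]
      by (rule DERIV_cong[OF DERIV_mult'[OF hder[OF z] h2]]) (simp add: \<Psi>'_def algebra_simps)
    then show "(\<Psi> has_vector_derivative \<Psi>' z) (at z within {c..d})"
      using has_real_derivative_iff_has_vector_derivative has_vector_derivative_at_within by blast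
  qed
  have "continuous_on {c..d} (\<lambda>z. \<bar>x s z\<bar> powr p)"
    using cd s p_gt by (auto intro!: continuous_intros continuous_on_powr' slice_cont)
  then have iu: "((\<lambda>z. \<bar>x s z\<bar> powr p) has_integral integral {c..d} (\<lambda>z. \<bar>x s z\<bar> powr p)) {c..d}"
    by (simp add: integrable_continuous_interval integrable_integral)
  have "continuous_on {c..d} (\<lambda>z. p*(p-1)*\<bar>x s z\<bar> powr (p-2) * (xz s z)^2)"
    using cd s p_gt by (auto intro!: continuous_intros continuous_on_powr' slice_cont xz_cont)
  then have il: "((\<lambda>z. p*(p-1)*\<bar>x s z\<bar> powr (p-2) * (xz s z)^2) has_integral
      integral {c..d} (\<lambda>z. p*(p-1)*\<bar>x s z\<bar> powr (p-2) * (xz s z)^2)) {c..d}"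
    by (simp add: integrable_continuous_interval integrable_integral)
  have ir: "((\<lambda>z. \<kappa>*k^2*\<bar>x s z\<bar> powr p + \<kappa>*\<Psi>' z) has_integral
      \<kappa>*k^2*integral {c..d} (\<lambda>z. \<bar>x s z\<bar> powr p) + \<kappa>*(\<Psi> d - \<Psi> c)) {c..d}"
    by (intro has_integral_add has_integral_mult_right iu ftc)
  have "\<kappa>*k^2*integral {c..d} (\<lambda>z. \<bar>x s z\<bar> powr p) + \<kappa>*(\<Psi> d - \<Psi> c)
      \<le> integral {c..d} (\<lambda>z. p*(p-1)*\<bar>x s z\<bar> powr (p-2) * (xz s z)^2)"
  proof (rule has_integral_le[OF ir il])
    fix z assume "z \<in> {c..d}"
    show "\<kappa>*k^2*\<bar>x s z\<bar> powr p + \<kappa>*\<Psi>' z \<le> p*(p-1)*\<bar>x s z\<bar> powr (p-2) * (xz s z)^2"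
      using pointwise_wirt[OF p_gt, where w="\<bar>x s z\<bar> powr (p-2)" and y'="xz s z" and k=k and y="x s z" and h="h z"]
      unfolding \<kappa>_def \<Psi>'_def pw_eq[of "x s z" p] by (simp add: algebra_simps)
  qed
  then show ?thesis by (simp add: \<kappa>_def \<Psi>_def)
qed

end


lemma integral_nonneg':
  fixes f :: "real \<Rightarrow> real"
  assumes "\<And>z. z \<in> S \<Longrightarrow> 0 \<le> f z"
  shows "0 \<le> integral S f"
  using assms integral_nonneg not_integrable_integral by (metis order_refl)

context heat begin

definition Fw :: "real \<Rightarrow> real \<Rightarrow> real \<Rightarrow> real" where
  "Fw \<delta> \<eta> s = integral {\<delta>..\<delta>+\<eta>} (\<lambda>z. (-\<delta>/\<eta> + (1/\<eta>)*z) * \<bar>x s z\<bar> powr p)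
     + integral {\<delta>+\<eta>..1-(\<delta>+\<eta>)} (\<lambda>z. \<bar>x s z\<bar> powr p)
     + integral {1-(\<delta>+\<eta>)..1-\<delta>} (\<lambda>z. ((1-\<delta>)/\<eta> + (-1/\<eta>)*z) * \<bar>x s z\<bar> powr p)"

lemma time_deriv2:
  assumes cd: "0 < c" "c \<le> d" "d < 1" and s: "s > 0"
  shows "((\<lambda>s. integral {c..d} (\<lambda>z. (A + B*z) * \<bar>x s z\<bar> powr p)) has_real_derivative
          a * integral {c..d} (\<lambda>z. (A + B*z) * (p * (\<bar>x s z\<bar> powr (p-2) * x s z) * xzz s z))) (at s)"
proof -
  have "integral {c..d} (\<lambda>z. (A + B*z) * (p * (\<bar>x s z\<bar> powr (p-2) * x s z) * xt s z))
      = integral {c..d} (\<lambda>z. a * ((A + B*z) * (p * (\<bar>x s z\<bar> powr (p-2) * x s z) * xzz s z)))"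
    by (rule integral_cong) (use cd s pde in auto)
  also have "\<dots> = a * integral {c..d} (\<lambda>z. (A + B*z) * (p * (\<bar>x s z\<bar> powr (p-2) * x s z) * xzz s z))"
    by (rule integral_mult_right)
  finally show ?thesis using time_deriv[OF assms, of A B] by simp
qed

lemma fw_deriv_le:
  assumes s: "s > 0" and \<delta>: "0 < \<delta>" and \<eta>: "0 < \<eta>" and small: "\<delta> + \<eta> \<le> 1/2"
    and hder: "\<And>z. z \<in> {\<delta>+\<eta>..1-(\<delta>+\<eta>)} \<Longrightarrow> (h has_real_derivative (-(k^2) - (h z)^2)) (at z)"
    and hb: "\<And>z. z \<in> {\<delta>+\<eta>..1-(\<delta>+\<eta>)} \<Longrightarrow> \<bar>h z\<bar> \<le> C"
    and C: "(4*(p-1)/p) * C \<le> 1/\<eta>"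
  shows "\<exists>D. (Fw \<delta> \<eta> has_real_derivative D) (at s) \<and>
     D \<le> a * (\<bar>x s \<delta>\<bar> powr p + \<bar>x s (1-\<delta>)\<bar> powr p) / \<eta>
          - a * (4*(p-1)/p) * k^2 * integral {\<delta>+\<eta>..1-(\<delta>+\<eta>)} (\<lambda>z. \<bar>x s z\<bar> powr p)"
proof -
  define \<alpha> where "\<alpha> = \<delta> + \<eta>"
  define \<beta> where "\<beta> = 1 - \<alpha>"
  define \<kappa> where "\<kappa> = 4*(p-1)/p"
  define u where "u z = \<bar>x s z\<bar> powr p" for z
  define q where "q z = p*(\<bar>x s z\<bar> powr (p-2) * x s z) * xz s z" for z
  define J where "J A B c d = integral {c..d} (\<lambda>z. (A+B*z) * (p*(p-1)*\<bar>x s z\<bar> powr (p-2) * (xz s z)^2))" for A B c d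
  define I where "I A B c d = integral {c..d} (\<lambda>z. (A+B*z) * (p*(\<bar>x s z\<bar> powr (p-2) * x s z) * xzz s z))" for A B c d
  have ord: "0 < \<delta>" "\<delta> \<le> \<alpha>" "\<alpha> \<le> \<beta>" "\<beta> \<le> 1 - \<delta>" "1 - \<delta> < 1" "0 < \<alpha>" "\<beta> < 1"
    using \<delta> \<eta> small by (auto simp: \<alpha>_def \<beta>_def)
  have u0: "\<And>z. u z \<ge> 0" by (simp add: u_def)
  have d1: "((\<lambda>s. integral {\<delta>..\<alpha>} (\<lambda>z. (-\<delta>/\<eta> + (1/\<eta>)*z) * \<bar>x s z\<bar> powr p)) has_real_derivative a * I (-\<delta>/\<eta>) (1/\<eta>) \<delta> \<alpha>) (at s)"
    unfolding I_def by (rule time_deriv2) (use ord s in auto)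
  have d2': "((\<lambda>s. integral {\<alpha>..\<beta>} (\<lambda>z. (1 + 0*z) * \<bar>x s z\<bar> powr p)) has_real_derivative a * I 1 0 \<alpha> \<beta>) (at s)"
    unfolding I_def by (rule time_deriv2) (use ord s in auto)
  have d2: "((\<lambda>s. integral {\<alpha>..\<beta>} (\<lambda>z. \<bar>x s z\<bar> powr p)) has_real_derivative a * I 1 0 \<alpha> \<beta>) (at s)"
    using d2' by simp
  have d3: "((\<lambda>s. integral {\<beta>..1-\<delta>} (\<lambda>z. ((1-\<delta>)/\<eta> + (-1/\<eta>)*z) * \<bar>x s z\<bar> powr p)) has_real_derivative a * I ((1-\<delta>)/\<eta>) (-1/\<eta>) \<beta> (1-\<delta>)) (at s)"
    unfolding I_def by (rule time_deriv2) (use ord s in auto)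
  have dF: "(Fw \<delta> \<eta> has_real_derivative a * I (-\<delta>/\<eta>) (1/\<eta>) \<delta> \<alpha> + a * I 1 0 \<alpha> \<beta> + a * I ((1-\<delta>)/\<eta>) (-1/\<eta>) \<beta> (1-\<delta>)) (at s)"
    unfolding Fw_def[abs_def] using DERIV_add[OF DERIV_add[OF d1 d2] d3] by (simp add: \<alpha>_def \<beta>_def)
  have I1: "I (-\<delta>/\<eta>) (1/\<eta>) \<delta> \<alpha> = (q \<alpha> - u \<alpha> / \<eta>) - (- u \<delta> / \<eta>) - J (-\<delta>/\<eta>) (1/\<eta>) \<delta> \<alpha>"
  proof -
    have "I (-\<delta>/\<eta>) (1/\<eta>) \<delta> \<alpha> = ((-\<delta>/\<eta> + (1/\<eta>)*\<alpha>) * q \<alpha> - (1/\<eta>) * u \<alpha>) - ((-\<delta>/\<eta> + (1/\<eta>)*\<delta>) * q \<delta> - (1/\<eta>) * u \<delta>) - J (-\<delta>/\<eta>) (1/\<eta>) \<delta> \<alpha>"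
      unfolding I_def J_def q_def u_def by (rule space_ibp) (use ord s in auto)
    moreover have "-\<delta>/\<eta> + (1/\<eta>)*\<alpha> = 1" "-\<delta>/\<eta> + (1/\<eta>)*\<delta> = 0"
      using \<eta> by (auto simp: \<alpha>_def field_simps)
    ultimately show ?thesis by simp
  qed
  have I2: "I 1 0 \<alpha> \<beta> = q \<beta> - q \<alpha> - J 1 0 \<alpha> \<beta>"
  proof -
    have "I 1 0 \<alpha> \<beta> = ((1 + 0*\<beta>) * q \<beta> - 0 * u \<beta>) - ((1 + 0*\<alpha>) * q \<alpha> - 0 * u \<alpha>) - J 1 0 \<alpha> \<beta>"
      unfolding I_def J_def q_def u_def by (rule space_ibp) (use ord s in auto)
    then show ?thesis by simp
  qed
  have I3: "I ((1-\<delta>)/\<eta>) (-1/\<eta>) \<beta> (1-\<delta>) = (u (1-\<delta>) / \<eta>) - (q \<beta> + u \<beta> / \<eta>) - J ((1-\<delta>)/\<eta>) (-1/\<eta>) \<beta> (1-\<delta>)"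
  proof -
    have "I ((1-\<delta>)/\<eta>) (-1/\<eta>) \<beta> (1-\<delta>) = (((1-\<delta>)/\<eta> + (-1/\<eta>)*(1-\<delta>)) * q (1-\<delta>) - (-1/\<eta>) * u (1-\<delta>)) - (((1-\<delta>)/\<eta> + (-1/\<eta>)*\<beta>) * q \<beta> - (-1/\<eta>) * u \<beta>) - J ((1-\<delta>)/\<eta>) (-1/\<eta>) \<beta> (1-\<delta>)"
      unfolding I_def J_def q_def u_def by (rule space_ibp) (use ord s in auto)
    moreover have "(1-\<delta>)/\<eta> + (-1/\<eta>)*(1-\<delta>) = 0" "(1-\<delta>)/\<eta> + (-1/\<eta>)*\<beta> = 1"
      using \<eta> by (auto simp: \<alpha>_def \<beta>_def field_simps)
    ultimately show ?thesis by simp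
  qed
  have J1: "J (-\<delta>/\<eta>) (1/\<eta>) \<delta> \<alpha> \<ge> 0"
    unfolding J_def
  proof (rule integral_nonneg')
    fix z assume z: "z \<in> {\<delta>..\<alpha>}"
    have "-\<delta>/\<eta> + (1/\<eta>)*z \<ge> 0" using z \<eta> by (auto simp: field_simps)
    then show "0 \<le> (-\<delta>/\<eta> + (1/\<eta>)*z) * (p*(p-1)*\<bar>x s z\<bar> powr (p-2) * (xz s z)^2)"
      using p_gt by simp
  qed
  have J3: "J ((1-\<delta>)/\<eta>) (-1/\<eta>) \<beta> (1-\<delta>) \<ge> 0"
    unfolding J_def
  proof (rule integral_nonneg')
    fix z assume z: "z \<in> {\<beta>..1-\<delta>}"
    have e: "(1-\<delta>)/\<eta> + (-1/\<eta>)*z = (1-\<delta>-z)/\<eta>" using \<eta> by (simp add: field_simps)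
    have "(1-\<delta>-z)/\<eta> \<ge> 0" using z \<eta> by auto
    then have "(1-\<delta>)/\<eta> + (-1/\<eta>)*z \<ge> 0" using e by simp
    then show "0 \<le> ((1-\<delta>)/\<eta> + (-1/\<eta>)*z) * (p*(p-1)*\<bar>x s z\<bar> powr (p-2) * (xz s z)^2)"
      using p_gt by simp
  qed
  have J2: "J 1 0 \<alpha> \<beta> \<ge> \<kappa>*k^2*integral {\<alpha>..\<beta>} u + \<kappa>*(h \<beta> * u \<beta> - h \<alpha> * u \<alpha>)"
  proof -
    have "integral {\<alpha>..\<beta>} (\<lambda>z. p*(p-1)*\<bar>x s z\<bar> powr (p-2) * (xz s z)^2)
     \<ge> (4*(p-1)/p)*k^2*integral {\<alpha>..\<beta>} (\<lambda>z. \<bar>x s z\<bar> powr p)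
       + (4*(p-1)/p)*(h \<beta> * \<bar>x s \<beta>\<bar> powr p - h \<alpha> * \<bar>x s \<alpha>\<bar> powr p)"
      by (rule wirt) (use ord s hder in \<open>auto simp: \<alpha>_def \<beta>_def\<close>)
    then show ?thesis by (simp add: J_def \<kappa>_def u_def[abs_def])
  qed
  have kp: "\<kappa> > 0" using p_gt by (simp add: \<kappa>_def)
  have ha: "\<kappa> * h \<alpha> * u \<alpha> \<le> u \<alpha> / \<eta>"
  proof -
    have "\<kappa> * h \<alpha> \<le> \<kappa> * C" using hb[of \<alpha>] kp ord by (auto simp: \<alpha>_def \<beta>_def)
    also have "\<dots> \<le> 1/\<eta>" using C by (simp add: \<kappa>_def)
    finally show ?thesis using u0[of \<alpha>] mult_right_mono by fastforce
  qed
  have hbb: "- \<kappa> * h \<beta> * u \<beta> \<le> u \<beta> / \<eta>"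
  proof -
    have "- h \<beta> \<le> C" using hb[of \<beta>] ord by (auto simp: \<alpha>_def \<beta>_def)
    then have "- \<kappa> * h \<beta> \<le> \<kappa> * C" using mult_left_mono[of "- h \<beta>" C \<kappa>] kp by simp
    also have "\<dots> \<le> 1/\<eta>" using C by (simp add: \<kappa>_def)
    finally show ?thesis using u0[of \<beta>] mult_right_mono by fastforce
  qed
  have sumI: "I (-\<delta>/\<eta>) (1/\<eta>) \<delta> \<alpha> + I 1 0 \<alpha> \<beta> + I ((1-\<delta>)/\<eta>) (-1/\<eta>) \<beta> (1-\<delta>)
      \<le> (u \<delta> + u (1-\<delta>)) / \<eta> - \<kappa>*k^2*integral {\<alpha>..\<beta>} u"
    using I1 I2 I3 J1 J2 J3 ha hbb by (simp add: add_divide_distrib diff_divide_distrib algebra_simps)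
  show ?thesis
  proof (intro exI conjI)
    show "(Fw \<delta> \<eta> has_real_derivative a * I (-\<delta>/\<eta>) (1/\<eta>) \<delta> \<alpha> + a * I 1 0 \<alpha> \<beta> + a * I ((1-\<delta>)/\<eta>) (-1/\<eta>) \<beta> (1-\<delta>)) (at s)"
      by (rule dF)
    have "a * I (-\<delta>/\<eta>) (1/\<eta>) \<delta> \<alpha> + a * I 1 0 \<alpha> \<beta> + a * I ((1-\<delta>)/\<eta>) (-1/\<eta>) \<beta> (1-\<delta>)
        = a * (I (-\<delta>/\<eta>) (1/\<eta>) \<delta> \<alpha> + I 1 0 \<alpha> \<beta> + I ((1-\<delta>)/\<eta>) (-1/\<eta>) \<beta> (1-\<delta>))"
      by (simp add: algebra_simps)
    also have "\<dots> \<le> a * ((u \<delta> + u (1-\<delta>)) / \<eta> - \<kappa>*k^2*integral {\<alpha>..\<beta>} u)"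
      using sumI a_pos by (simp add: mult_left_mono)
    finally show "a * I (-\<delta>/\<eta>) (1/\<eta>) \<delta> \<alpha> + a * I 1 0 \<alpha> \<beta> + a * I ((1-\<delta>)/\<eta>) (-1/\<eta>) \<beta> (1-\<delta>)
      \<le> a * (\<bar>x s \<delta>\<bar> powr p + \<bar>x s (1-\<delta>)\<bar> powr p) / \<eta>
          - a * (4*(p-1)/p) * k^2 * integral {\<delta>+\<eta>..1-(\<delta>+\<eta>)} (\<lambda>z. \<bar>x s z\<bar> powr p)"
      by (simp add: u_def[abs_def] \<kappa>_def \<alpha>_def \<beta>_def algebra_simps)
  qed
qed

end


lemma tan_h:
  fixes k z :: real
  assumes k: "0 < k" "k < pi" and z: "z \<in> {0..1}"
  shows "((\<lambda>z. -k*tan(k*(z-1/2))) has_real_derivative (-(k^2) - (-k*tan(k*(z-1/2)))^2)) (at z)"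
proof -
  define y where "y = k*(z-1/2)"
  have "\<bar>y\<bar> \<le> k/2" using z k by (auto simp: y_def abs_mult abs_le_iff mult_le_cancel_left field_simps)
  then have "-(pi/2) < y" "y < pi/2" using k by auto
  then have c: "cos y > 0" by (rule cos_gt_zero_pi)
  have d: "((\<lambda>z. -k*tan(k*(z-1/2))) has_real_derivative -k * (inverse (cos y ^ 2) * (k * 1))) (at z)"
  proof -
    have l: "((\<lambda>z. k*(z-1/2)) has_real_derivative k * 1) (at z)"
      by (auto intro!: derivative_eq_intros)
    have "cos (k*(z-1/2)) \<noteq> 0" using c y_def by simp
    from DERIV_chain2[OF DERIV_tan[OF this] l]
    show ?thesis unfolding y_def by (intro DERIV_cmult) simp
  qed
  have "-k * (inverse (cos y ^ 2) * (k * 1)) = -(k^2) - (-k*tan y)^2"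
  proof -
    have e: "sin y * sin y + cos y * cos y = 1" using sin_cos_squared_add[of y] by (simp add: power2_eq_square)
    have "k*(k*(cos y * cos y)) + k*(k*(sin y * sin y)) = k*k*(sin y * sin y + cos y * cos y)"
      by algebra
    then have "k*(k*(cos y * cos y)) + k*(k*(sin y * sin y)) = k*k" using e by (metis mult_1_right)
    then show ?thesis using c by (simp add: tan_def field_simps power2_eq_square)
  qed
  then show ?thesis using d by (simp add: y_def)
qed



lemma small_eta:
  fixes X Y K \<eta>0 :: real
  assumes "\<eta>0 > 0" "K \<ge> 0" "\<And>\<eta>. 0 < \<eta> \<Longrightarrow> \<eta> \<le> \<eta>0 \<Longrightarrow> X \<le> Y + \<eta> * K"
  shows "X \<le> Y"
proof (rule ccontr)
  assume "\<not> X \<le> Y"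
  then have d: "X - Y > 0" by simp
  define \<eta> where "\<eta> = min \<eta>0 ((X - Y) / (2 * (K + 1)))"
  have "\<eta> > 0" using d assms by (simp add: \<eta>_def)
  then have "X \<le> Y + \<eta> * K" using assms by (simp add: \<eta>_def)
  moreover have "\<eta> * K \<le> (X - Y) / (2 * (K + 1)) * K"
    using assms \<open>\<eta> > 0\<close> by (intro mult_right_mono) (auto simp: \<eta>_def)
  moreover have "(X - Y) / (2 * (K + 1)) * K < X - Y"
  proof -
    have "(X - Y) / (2 * (K + 1)) * K = (X - Y) * (K / (2 * (K + 1)))" by simp
    also have "\<dots> < (X - Y) * 1"
      using d assms by (intro mult_strict_left_mono) (auto simp: field_simps)
    finally show ?thesis by simp
  qed
  ultimately show False by linarith
qed

context heat begin

definition F :: "real \<Rightarrow> real" where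
  "F s = integral {0..1} (\<lambda>z. \<bar>x s z\<bar> powr p)"

lemma ell_int: "s \<ge> 0 \<Longrightarrow> 0 \<le> c \<Longrightarrow> d \<le> 1 \<Longrightarrow> (\<lambda>z. (A + B*z) * \<bar>x s z\<bar> powr p) integrable_on {c..d}"
  by (rule integrable_continuous_interval)
     (use p_gt in \<open>auto intro!: continuous_intros continuous_on_powr' slice_cont\<close>)

lemma u_int: "s \<ge> 0 \<Longrightarrow> 0 \<le> c \<Longrightarrow> d \<le> 1 \<Longrightarrow> (\<lambda>z. \<bar>x s z\<bar> powr p) integrable_on {c..d}"
  by (rule integrable_continuous_interval)
     (use p_gt in \<open>auto intro!: continuous_intros continuous_on_powr' slice_cont\<close>)

lemma u_split: "s \<ge> 0 \<Longrightarrow> 0 \<le> c \<Longrightarrow> c \<le> m \<Longrightarrow> m \<le> d \<Longrightarrow> d \<le> 1 \<Longrightarrow>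
  integral {c..d} (\<lambda>z. \<bar>x s z\<bar> powr p) = integral {c..m} (\<lambda>z. \<bar>x s z\<bar> powr p) + integral {m..d} (\<lambda>z. \<bar>x s z\<bar> powr p)"
  using Henstock_Kurzweil_Integration.integral_combine[where a=c and c=m and b=d and f="\<lambda>z. \<bar>x s z\<bar> powr p"] u_int[of s c d] by simp

lemma u_int_nonneg: "0 \<le> integral {c..d} (\<lambda>z. \<bar>x s z\<bar> powr p)"
  by (rule integral_nonneg') simp

lemma ramp_bounds:
  assumes "s \<ge> 0" "0 \<le> c" "d \<le> 1" "\<And>z. z \<in> {c..d} \<Longrightarrow> 0 \<le> A + B*z \<and> A + B*z \<le> 1"
  shows "0 \<le> integral {c..d} (\<lambda>z. (A + B*z) * \<bar>x s z\<bar> powr p)"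
    "integral {c..d} (\<lambda>z. (A + B*z) * \<bar>x s z\<bar> powr p) \<le> integral {c..d} (\<lambda>z. \<bar>x s z\<bar> powr p)"
proof -
  show "0 \<le> integral {c..d} (\<lambda>z. (A + B*z) * \<bar>x s z\<bar> powr p)"
    by (rule integral_nonneg') (use assms(4) in simp)
  show "integral {c..d} (\<lambda>z. (A + B*z) * \<bar>x s z\<bar> powr p) \<le> integral {c..d} (\<lambda>z. \<bar>x s z\<bar> powr p)"
  proof (rule integral_le[OF ell_int u_int])
    fix z assume "z \<in> {c..d}"
    then show "(A + B*z) * \<bar>x s z\<bar> powr p \<le> \<bar>x s z\<bar> powr p"
      using assms(4)[of z] mult_right_mono[of "A+B*z" 1 "\<bar>x s z\<bar> powr p"] by simp
  qed (use assms in auto)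
qed

lemma int_M:
  assumes "s \<ge> 0" "0 \<le> c" "c \<le> d" "d \<le> 1" "\<And>z. z \<in> {c..d} \<Longrightarrow> \<bar>x s z\<bar> powr p \<le> M"
  shows "integral {c..d} (\<lambda>z. \<bar>x s z\<bar> powr p) \<le> (d - c) * M"
proof -
  have "integral {c..d} (\<lambda>z. \<bar>x s z\<bar> powr p) \<le> integral {c..d} (\<lambda>z. M)"
    by (rule integral_le[OF u_int]) (use assms in auto)
  then show ?thesis using assms by simp
qed

lemma piece_cont:
  assumes "0 \<le> c" "d \<le> 1"
  shows "continuous_on {0..} (\<lambda>s. integral {c..d} (\<lambda>z. (A + B*z) * \<bar>x s z\<bar> powr p))"
proof -
  have sub: "{0..} \<times> cbox c d \<subseteq> {0..} \<times> {0..1}" using assms by auto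
  have "continuous_on ({0..} \<times> cbox c d) (\<lambda>w. (A + B * snd w) * \<bar>x (fst w) (snd w)\<bar> powr p)"
    using p_gt by (intro continuous_intros cont_pow[OF sub]) auto
  then have "continuous_on ({0..} \<times> cbox c d) (\<lambda>(s, z). (A + B * z) * \<bar>x s z\<bar> powr p)"
    by (simp add: split_beta)
  from integral_continuous_on_param[OF this] show ?thesis by simp
qed

lemma Fw_cont:
  assumes "0 < \<delta>" "0 < \<eta>" "\<delta> + \<eta> \<le> 1/2"
  shows "continuous_on {0..} (Fw \<delta> \<eta>)"
proof -
  have c2: "continuous_on {0..} (\<lambda>s. integral {\<delta>+\<eta>..1-(\<delta>+\<eta>)} (\<lambda>z. (1 + 0*z) * \<bar>x s z\<bar> powr p))"
    by (rule piece_cont) (use assms in auto)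
  show ?thesis unfolding Fw_def[abs_def]
    using assms c2 by (intro continuous_intros piece_cont) auto
qed

end

context heat begin

lemma est_k:
  assumes k: "0 < k" "k < pi" and t: "t \<ge> 0"
  shows "exp (a*(4*(p-1)/p)*k^2*t) * F t \<le> F 0"
proof -
  define \<kappa> where "\<kappa> = 4*(p-1)/p"
  define LAM where "LAM = a*\<kappa>*k^2"
  have kp: "\<kappa> > 0" using p_gt by (simp add: \<kappa>_def)
  have lp: "LAM > 0" using kp a_pos k by (simp add: LAM_def)
  define h where "h z = -k*tan(k*(z-1/2))" for z
  have hder: "\<And>z. z \<in> {0..1} \<Longrightarrow> (h has_real_derivative (-(k^2) - (h z)^2)) (at z)"
    unfolding h_def using tan_h[OF k] by blast
  obtain C where C: "C > 0" "\<And>z. z \<in> {0..1} \<Longrightarrow> \<bar>h z\<bar> \<le> C"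
  proof -
    have "continuous_on {0..1} h"
      by (rule continuous_at_imp_continuous_on) (use hder DERIV_isCont in blast)
    then have "continuous_on {0..1} (\<lambda>z. \<bar>h z\<bar>)" by (intro continuous_intros)
    from continuous_attains_sup[OF compact_Icc _ this] obtain z0 where
      "\<And>z. z \<in> {0..1} \<Longrightarrow> \<bar>h z\<bar> \<le> \<bar>h z0\<bar>" by fastforce
    then show ?thesis by (intro that[of "\<bar>h z0\<bar> + 1"]) force+
  qed
  define S where "S = {0..t} \<times> {0..(1::real)}"
  have Ssub: "S \<subseteq> {0..} \<times> {0..1}" by (auto simp: S_def)
  have Sc: "compact S" by (simp add: S_def compact_Times)
  have ucont: "continuous_on S (\<lambda>w. \<bar>x (fst w) (snd w)\<bar> powr p)"
    using p_gt by (intro cont_pow Ssub) auto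
  obtain M where M: "M \<ge> 0" "\<And>s z. s \<in> {0..t} \<Longrightarrow> z \<in> {0..1} \<Longrightarrow> \<bar>x s z\<bar> powr p \<le> M"
  proof -
    have "S \<noteq> {}" using t by (auto simp: S_def)
    from continuous_attains_sup[OF Sc this ucont] obtain w0 where
      "w0 \<in> S" "\<And>w. w \<in> S \<Longrightarrow> \<bar>x (fst w) (snd w)\<bar> powr p \<le> \<bar>x (fst w0) (snd w0)\<bar> powr p" by blast
    then show ?thesis by (intro that[of "\<bar>x (fst w0) (snd w0)\<bar> powr p"]) (auto simp: S_def)
  qed
  have unif: "\<exists>\<rho>>0. \<forall>s\<in>{0..t}. \<forall>z\<in>{0..1}. (z < \<rho> \<or> 1 - z < \<rho>) \<longrightarrow> \<bar>x s z\<bar> powr p < \<epsilon>"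
    if e: "\<epsilon> > 0" for \<epsilon>
  proof -
    have "uniformly_continuous_on S (\<lambda>w. \<bar>x (fst w) (snd w)\<bar> powr p)"
      by (rule compact_uniformly_continuous[OF ucont Sc])
    then obtain \<rho> where \<rho>: "\<rho> > 0" and
      uc: "\<And>w w'. w \<in> S \<Longrightarrow> w' \<in> S \<Longrightarrow> dist w' w < \<rho> \<Longrightarrow>
        dist (\<bar>x (fst w') (snd w')\<bar> powr p) (\<bar>x (fst w) (snd w)\<bar> powr p) < \<epsilon>"
      unfolding uniformly_continuous_on_def using e by metis
    show ?thesis
    proof (intro exI[of _ \<rho>] conjI ballI impI \<rho>)
      fix s z assume s: "s \<in> {0..t}" and z: "z \<in> {0..1}" and zz: "z < \<rho> \<or> 1 - z < \<rho>"
      have b: "x s 0 = 0" "x s 1 = 0" using bc[of s] s by auto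
      from zz show "\<bar>x s z\<bar> powr p < \<epsilon>"
      proof
        assume "z < \<rho>"
        then have "dist (s, z) (s, 0) < \<rho>" using z by (simp add: dist_Pair_Pair dist_real_def)
        from uc[of "(s,0)" "(s,z)", OF _ _ this] s z b show ?thesis
          by (simp add: S_def dist_real_def)
      next
        assume "1 - z < \<rho>"
        then have "dist (s, z) (s, 1) < \<rho>" using z by (simp add: dist_Pair_Pair dist_real_def)
        from uc[of "(s,1)" "(s,z)", OF _ _ this] s z b show ?thesis
          by (simp add: S_def dist_real_def)
      qed
    qed
  qed
  define K0 where "K0 = exp (LAM*t) * (t * (2*LAM*M + 2*a) + 4*M)"
  have K0: "K0 \<ge> 0" using M t lp a_pos by (simp add: K0_def)
  define \<eta>0 where "\<eta>0 = min (1/4) (1/(\<kappa>*C))"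
  have \<eta>0: "\<eta>0 > 0" using kp C by (simp add: \<eta>0_def)
  have main: "exp (LAM*t) * F t \<le> F 0 + \<eta> * K0" if \<eta>: "0 < \<eta>" "\<eta> \<le> \<eta>0" for \<eta>
  proof -
    have \<eta>14: "\<eta> \<le> 1/4" using \<eta> by (simp add: \<eta>0_def)
    have \<eta>C: "\<kappa> * C \<le> 1/\<eta>"
    proof -
      have "\<eta> \<le> 1/(\<kappa>*C)" using \<eta> by (simp add: \<eta>0_def)
      then have "\<eta> * (\<kappa>*C) \<le> 1" using kp C by (simp add: field_simps)
      then show ?thesis using \<eta> by (simp add: field_simps)
    qed
    obtain \<rho> where \<rho>: "\<rho> > 0" and
      rho: "\<And>s z. s \<in> {0..t} \<Longrightarrow> z \<in> {0..1} \<Longrightarrow> z < \<rho> \<or> 1 - z < \<rho> \<Longrightarrow> \<bar>x s z\<bar> powr p < \<eta>^2"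
    proof -
      have "\<eta>^2 > 0" using \<eta> by simp
      from unif[OF this] obtain \<rho> where "\<rho> > 0" and
        "\<forall>s\<in>{0..t}. \<forall>z\<in>{0..1}. (z < \<rho> \<or> 1 - z < \<rho>) \<longrightarrow> \<bar>x s z\<bar> powr p < \<eta>^2" by blast
      then show ?thesis using that by blast
    qed
    define \<delta> where "\<delta> = min (\<rho>/2) \<eta>"
    have \<delta>: "0 < \<delta>" "\<delta> \<le> \<eta>" "\<delta> < \<rho>" using \<rho> \<eta> by (auto simp: \<delta>_def)
    have sm: "\<delta> + \<eta> \<le> 1/2" using \<delta> \<eta>14 by simp
    define K1 where "K1 = exp (LAM*t) * (2*LAM*M*\<eta> + 2*a*\<eta>)"
    define G where "G s = exp (LAM * s) * Fw \<delta> \<eta> s - K1 * s" for s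
    have "G t \<le> G 0"
    proof (rule DERIV_nonpos_imp_decreasing_open[OF t])
      show "continuous_on {0..t} G"
        unfolding G_def[abs_def]
        by (intro continuous_intros continuous_on_subset[OF Fw_cont[OF \<delta>(1) \<eta>(1) sm]]) auto
    next
      fix s assume s: "0 < s" "s < t"
      obtain D where D: "(Fw \<delta> \<eta> has_real_derivative D) (at s)"
        and Dle: "D \<le> a * (\<bar>x s \<delta>\<bar> powr p + \<bar>x s (1-\<delta>)\<bar> powr p) / \<eta>
          - a * (4*(p-1)/p) * k^2 * integral {\<delta>+\<eta>..1-(\<delta>+\<eta>)} (\<lambda>z. \<bar>x s z\<bar> powr p)"
      proof -
        have "\<exists>D. (Fw \<delta> \<eta> has_real_derivative D) (at s) \<and>
           D \<le> a * (\<bar>x s \<delta>\<bar> powr p + \<bar>x s (1-\<delta>)\<bar> powr p) / \<eta>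
          - a * (4*(p-1)/p) * k^2 * integral {\<delta>+\<eta>..1-(\<delta>+\<eta>)} (\<lambda>z. \<bar>x s z\<bar> powr p)"
        proof (rule fw_deriv_le[where h=h and C=C])
          show "\<And>z. z \<in> {\<delta>+\<eta>..1-(\<delta>+\<eta>)} \<Longrightarrow> (h has_real_derivative (-(k^2) - (h z)^2)) (at z)"
            using hder \<delta> \<eta> by auto
          show "\<And>z. z \<in> {\<delta>+\<eta>..1-(\<delta>+\<eta>)} \<Longrightarrow> \<bar>h z\<bar> \<le> C"
            using C \<delta> \<eta> by auto
          show "(4*(p-1)/p) * C \<le> 1/\<eta>" using \<eta>C by (simp add: \<kappa>_def)
        qed (use s \<delta> \<eta> sm in auto)
        then show ?thesis using that by blast
      qed
      define P1 where "P1 = integral {\<delta>..\<delta>+\<eta>} (\<lambda>z. (-\<delta>/\<eta> + (1/\<eta>)*z) * \<bar>x s z\<bar> powr p)"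
      define P2 where "P2 = integral {\<delta>+\<eta>..1-(\<delta>+\<eta>)} (\<lambda>z. \<bar>x s z\<bar> powr p)"
      define P3 where "P3 = integral {1-(\<delta>+\<eta>)..1-\<delta>} (\<lambda>z. ((1-\<delta>)/\<eta> + (-1/\<eta>)*z) * \<bar>x s z\<bar> powr p)"
      have FwP: "Fw \<delta> \<eta> s = P1 + P2 + P3" by (simp add: Fw_def P1_def P2_def P3_def)
      have Mz: "\<And>z. z \<in> {0..1} \<Longrightarrow> \<bar>x s z\<bar> powr p \<le> M" using M s by auto
      have P1le: "P1 \<le> \<eta> * M"
      proof -
        have "P1 \<le> integral {\<delta>..\<delta>+\<eta>} (\<lambda>z. \<bar>x s z\<bar> powr p)"
          unfolding P1_def
        proof (rule ramp_bounds(2))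
          fix z assume "z \<in> {\<delta>..\<delta>+\<eta>}"
          then show "0 \<le> -\<delta>/\<eta> + (1/\<eta>)*z \<and> -\<delta>/\<eta> + (1/\<eta>)*z \<le> 1"
            using \<eta> by (auto simp: field_simps)
        qed (use s \<delta> sm in auto)
        also have "\<dots> \<le> (\<delta> + \<eta> - \<delta>) * M"
          by (rule int_M) (use s \<delta> sm Mz in auto)
        finally show ?thesis by simp
      qed
      have P3le: "P3 \<le> \<eta> * M"
      proof -
        have "P3 \<le> integral {1-(\<delta>+\<eta>)..1-\<delta>} (\<lambda>z. \<bar>x s z\<bar> powr p)"
          unfolding P3_def
        proof (rule ramp_bounds(2))
          fix z assume z: "z \<in> {1-(\<delta>+\<eta>)..1-\<delta>}"
          have e: "(1-\<delta>)/\<eta> + (-1/\<eta>)*z = (1-\<delta>-z)/\<eta>" using \<eta> by (simp add: field_simps)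
          have "0 \<le> (1-\<delta>-z)/\<eta>" "(1-\<delta>-z)/\<eta> \<le> 1" using z \<eta> by (auto simp: field_simps)
          then show "0 \<le> (1-\<delta>)/\<eta> + (-1/\<eta>)*z \<and> (1-\<delta>)/\<eta> + (-1/\<eta>)*z \<le> 1" using e by simp
        qed (use s \<delta> sm in auto)
        also have "\<dots> \<le> (1 - \<delta> - (1-(\<delta>+\<eta>))) * M"
          by (rule int_M) (use s \<delta> sm Mz in auto)
        finally show ?thesis by simp
      qed
      have ub: "a * (\<bar>x s \<delta>\<bar> powr p + \<bar>x s (1-\<delta>)\<bar> powr p) / \<eta> \<le> 2*a*\<eta>"
      proof -
        have "\<bar>x s \<delta>\<bar> powr p + \<bar>x s (1-\<delta>)\<bar> powr p \<le> 2*\<eta>^2"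
          using rho[of s \<delta>] rho[of s "1-\<delta>"] s \<delta> sm by auto
        then have "a * (\<bar>x s \<delta>\<bar> powr p + \<bar>x s (1-\<delta>)\<bar> powr p) \<le> a * (2*\<eta>^2)"
          using a_pos by (intro mult_left_mono) auto
        then show ?thesis using \<eta> by (simp add: field_simps power2_eq_square)
      qed
      have Dle2: "LAM * Fw \<delta> \<eta> s + D \<le> 2*LAM*M*\<eta> + 2*a*\<eta>"
      proof -
        have "LAM * Fw \<delta> \<eta> s + D \<le> LAM * (P1 + P2 + P3) + 2*a*\<eta> - LAM * P2"
          using Dle ub FwP by (simp add: LAM_def \<kappa>_def P2_def)
        also have "\<dots> = LAM * (P1 + P3) + 2*a*\<eta>" by (simp add: algebra_simps)
        also have "\<dots> \<le> LAM * (2*M*\<eta>) + 2*a*\<eta>"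
          using P1le P3le lp by (intro add_right_mono mult_left_mono) (auto simp: algebra_simps)
        finally show ?thesis by (simp add: algebra_simps)
      qed
      have bnn: "0 \<le> 2*LAM*M*\<eta> + 2*a*\<eta>" using lp M \<eta> a_pos by simp
      have "exp (LAM * s) * (LAM * Fw \<delta> \<eta> s + D) \<le> exp (LAM * s) * (2*LAM*M*\<eta> + 2*a*\<eta>)"
        using Dle2 by (intro mult_left_mono) auto
      also have "\<dots> \<le> K1" unfolding K1_def
        using bnn s lp by (intro mult_right_mono) auto
      finally have le: "exp (LAM * s) * (LAM * Fw \<delta> \<eta> s + D) - K1 \<le> 0" by simp
      have "(G has_real_derivative exp (LAM * s) * D + exp (LAM * s) * LAM * Fw \<delta> \<eta> s - K1) (at s)"
        unfolding G_def[abs_def]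
        by (rule DERIV_cong[OF DERIV_diff[OF DERIV_mult'[OF _ D] DERIV_cmult[OF DERIV_ident]]])
           (auto intro!: derivative_eq_intros)
      then show "\<exists>y. (G has_real_derivative y) (at s) \<and> y \<le> 0"
        using le by (intro exI[of _ "exp (LAM * s) * D + exp (LAM * s) * LAM * Fw \<delta> \<eta> s - K1"]) (auto simp: algebra_simps)
    qed
    have G0: "G 0 \<le> F 0"
    proof -
      have "Fw \<delta> \<eta> 0 \<le> integral {\<delta>..\<delta>+\<eta>} (\<lambda>z. \<bar>x 0 z\<bar> powr p) + integral {\<delta>+\<eta>..1-(\<delta>+\<eta>)} (\<lambda>z. \<bar>x 0 z\<bar> powr p)
          + integral {1-(\<delta>+\<eta>)..1-\<delta>} (\<lambda>z. \<bar>x 0 z\<bar> powr p)"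
        unfolding Fw_def
      proof (intro add_mono order_refl)
        show "integral {\<delta>..\<delta>+\<eta>} (\<lambda>z. (-\<delta>/\<eta> + (1/\<eta>)*z) * \<bar>x 0 z\<bar> powr p) \<le> integral {\<delta>..\<delta>+\<eta>} (\<lambda>z. \<bar>x 0 z\<bar> powr p)"
        proof (rule ramp_bounds(2))
          fix z assume "z \<in> {\<delta>..\<delta>+\<eta>}"
          then show "0 \<le> -\<delta>/\<eta> + (1/\<eta>)*z \<and> -\<delta>/\<eta> + (1/\<eta>)*z \<le> 1"
            using \<eta> by (auto simp: field_simps)
        qed (use \<delta> sm in auto)
        show "integral {1-(\<delta>+\<eta>)..1-\<delta>} (\<lambda>z. ((1-\<delta>)/\<eta> + (-1/\<eta>)*z) * \<bar>x 0 z\<bar> powr p) \<le> integral {1-(\<delta>+\<eta>)..1-\<delta>} (\<lambda>z. \<bar>x 0 z\<bar> powr p)"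
        proof (rule ramp_bounds(2))
          fix z assume z: "z \<in> {1-(\<delta>+\<eta>)..1-\<delta>}"
          have e: "(1-\<delta>)/\<eta> + (-1/\<eta>)*z = (1-\<delta>-z)/\<eta>" using \<eta> by (simp add: field_simps)
          have "0 \<le> (1-\<delta>-z)/\<eta>" "(1-\<delta>-z)/\<eta> \<le> 1" using z \<eta> by (auto simp: field_simps)
          then show "0 \<le> (1-\<delta>)/\<eta> + (-1/\<eta>)*z \<and> (1-\<delta>)/\<eta> + (-1/\<eta>)*z \<le> 1" using e by simp
        qed (use \<delta> sm in auto)
      qed
      also have "\<dots> \<le> F 0"
      proof -
        let ?u = "\<lambda>z. \<bar>x 0 z\<bar> powr p"
        have "F 0 = integral {0..\<delta>} ?u + integral {\<delta>..1} ?u"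
          unfolding F_def by (rule u_split) (use \<delta> sm in auto)
        moreover have "integral {\<delta>..1} ?u = integral {\<delta>..\<delta>+\<eta>} ?u + integral {\<delta>+\<eta>..1} ?u"
          by (rule u_split) (use \<delta> \<eta> sm in auto)
        moreover have "integral {\<delta>+\<eta>..1} ?u = integral {\<delta>+\<eta>..1-(\<delta>+\<eta>)} ?u + integral {1-(\<delta>+\<eta>)..1} ?u"
          by (rule u_split) (use \<delta> \<eta> sm in auto)
        moreover have "integral {1-(\<delta>+\<eta>)..1} ?u = integral {1-(\<delta>+\<eta>)..1-\<delta>} ?u + integral {1-\<delta>..1} ?u"
          by (rule u_split) (use \<delta> \<eta> sm in auto)
        ultimately show ?thesis using u_int_nonneg[of 0 \<delta> 0] u_int_nonneg[of "1-\<delta>" 1 0] by linarith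
      qed
      finally show ?thesis by (simp add: G_def)
    qed
    have Gt: "G t \<ge> exp (LAM*t) * (F t - 4*\<eta>*M) - K1 * t"
    proof -
      let ?u = "\<lambda>z. \<bar>x t z\<bar> powr p"
      have Mz: "\<And>z. z \<in> {0..1} \<Longrightarrow> \<bar>x t z\<bar> powr p \<le> M" using M t by auto
      have "F t = integral {0..\<delta>+\<eta>} ?u + integral {\<delta>+\<eta>..1} ?u"
        unfolding F_def by (rule u_split) (use t \<delta> \<eta> sm in auto)
      moreover have "integral {\<delta>+\<eta>..1} ?u = integral {\<delta>+\<eta>..1-(\<delta>+\<eta>)} ?u + integral {1-(\<delta>+\<eta>)..1} ?u"
        by (rule u_split) (use t \<delta> \<eta> sm in auto)
      moreover have "integral {0..\<delta>+\<eta>} ?u \<le> (\<delta>+\<eta> - 0) * M"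
        by (rule int_M) (use t \<delta> \<eta> sm Mz in auto)
      moreover have "integral {1-(\<delta>+\<eta>)..1} ?u \<le> (1 - (1-(\<delta>+\<eta>))) * M"
        by (rule int_M) (use t \<delta> \<eta> sm Mz in auto)
      ultimately have "F t - 4*\<eta>*M \<le> integral {\<delta>+\<eta>..1-(\<delta>+\<eta>)} ?u"
        using \<delta> M mult_right_mono[of \<delta> \<eta> M] by (simp add: algebra_simps)
      also have "\<dots> \<le> Fw \<delta> \<eta> t"
      proof -
        have "0 \<le> integral {\<delta>..\<delta>+\<eta>} (\<lambda>z. (-\<delta>/\<eta> + (1/\<eta>)*z) * \<bar>x t z\<bar> powr p)"
        proof (rule ramp_bounds(1))
          fix z assume "z \<in> {\<delta>..\<delta>+\<eta>}"
          then show "0 \<le> -\<delta>/\<eta> + (1/\<eta>)*z \<and> -\<delta>/\<eta> + (1/\<eta>)*z \<le> 1"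
            using \<eta> by (auto simp: field_simps)
        qed (use t \<delta> sm in auto)
        moreover have "0 \<le> integral {1-(\<delta>+\<eta>)..1-\<delta>} (\<lambda>z. ((1-\<delta>)/\<eta> + (-1/\<eta>)*z) * \<bar>x t z\<bar> powr p)"
        proof (rule ramp_bounds(1))
          fix z assume z: "z \<in> {1-(\<delta>+\<eta>)..1-\<delta>}"
          have e: "(1-\<delta>)/\<eta> + (-1/\<eta>)*z = (1-\<delta>-z)/\<eta>" using \<eta> by (simp add: field_simps)
          have "0 \<le> (1-\<delta>-z)/\<eta>" "(1-\<delta>-z)/\<eta> \<le> 1" using z \<eta> by (auto simp: field_simps)
          then show "0 \<le> (1-\<delta>)/\<eta> + (-1/\<eta>)*z \<and> (1-\<delta>)/\<eta> + (-1/\<eta>)*z \<le> 1" using e by simp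
        qed (use t \<delta> sm in auto)
        ultimately show ?thesis by (simp add: Fw_def)
      qed
      finally have "F t - 4*\<eta>*M \<le> Fw \<delta> \<eta> t" .
      then show ?thesis unfolding G_def by (simp add: mult_left_mono)
    qed
    have "exp (LAM*t) * (F t - 4*\<eta>*M) - K1 * t \<le> F 0"
      using \<open>G t \<le> G 0\<close> G0 Gt by linarith
    then show ?thesis by (simp add: K0_def K1_def algebra_simps)
  qed
  have "exp (LAM*t) * F t \<le> F 0"
    by (rule small_eta[OF \<eta>0 K0 main])
  then show ?thesis by (simp add: LAM_def \<kappa>_def)
qed

end

context heat begin

lemma est:
  assumes t: "t \<ge> 0"
  shows "F t \<le> exp (-(a*(4*(p-1)/p)*pi^2*t)) * F 0"
proof -
  let ?f = "\<lambda>k. exp (-(a*(4*(p-1)/p)*k^2*t)) * F 0"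
  have lim: "(?f \<longlongrightarrow> exp (-(a*(4*(p-1)/p)*pi^2*t)) * F 0) (at_left pi)"
    by (intro tendsto_intros tendsto_ident_at)
  have ev: "eventually (\<lambda>k. F t \<le> ?f k) (at_left pi)"
    unfolding eventually_at_left_field
  proof (intro exI[of _ 0] conjI allI impI)
    fix k :: real assume "0 < k" "k < pi"
    from est_k[OF this t] show "F t \<le> ?f k"
      by (simp add: exp_minus field_simps)
  qed simp
  show ?thesis
    by (rule tendsto_le[OF trivial_limit_at_left_real lim tendsto_const ev])
qed

end

theorem mainTheorem8:
  fixes a p :: real and x :: "real \<Rightarrow> real \<Rightarrow> real" and x0 :: "real \<Rightarrow> real"
    and xt xz xzz :: "real \<Rightarrow> real \<Rightarrow> real"
  assumes a_pos: "a > 0"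
    and p_gt: "p > 2"
    and cont: "continuous_on ({0..} \<times> {0..1}) (\<lambda>(t, z). x t z)"
    and d_t: "\<And>t z. t > 0 \<Longrightarrow> 0 < z \<Longrightarrow> z < 1 \<Longrightarrow>
                 ((\<lambda>s. x s z) has_real_derivative xt t z) (at t)"
    and d_z: "\<And>t z. t > 0 \<Longrightarrow> 0 < z \<Longrightarrow> z < 1 \<Longrightarrow>
                 ((\<lambda>w. x t w) has_real_derivative xz t z) (at z)"
    and d_zz: "\<And>t z. t > 0 \<Longrightarrow> 0 < z \<Longrightarrow> z < 1 \<Longrightarrow>
                 ((\<lambda>w. xz t w) has_real_derivative xzz t z) (at z)"
    and cont_t: "continuous_on ({0<..} \<times> {0<..<1}) (\<lambda>(t, z). xt t z)"
    and cont_z: "continuous_on ({0<..} \<times> {0<..<1}) (\<lambda>(t, z). xz t z)"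
    and cont_zz: "continuous_on ({0<..} \<times> {0<..<1}) (\<lambda>(t, z). xzz t z)"
    and C2_slices: "\<And>t. t \<ge> 0 \<Longrightarrow> C2_on {0..1} (x t)"
    and pde: "\<And>t z. t > 0 \<Longrightarrow> 0 < z \<Longrightarrow> z < 1 \<Longrightarrow> xt t z = a * xzz t z"
    and bc: "\<And>t. t \<ge> 0 \<Longrightarrow> x t 0 = 0 \<and> x t 1 = 0"
    and init: "\<And>z. z \<in> {0..1} \<Longrightarrow> x 0 z = x0 z"
    and x0_C2: "C2_on {0..1} x0"
  shows "\<forall>t\<ge>0. lp_norm p (x t) \<le> exp (- a * (p - 1) * (4 * pi\<^sup>2 / p\<^sup>2) * t) * lp_norm p x0"
proof (intro allI impI)
  fix t :: real assume t: "t \<ge> 0"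
  interpret heat a p x xt xz xzz
    by (unfold_locales) (use a_pos p_gt cont d_t d_z d_zz cont_t cont_zz pde bc in auto)
  define E where "E = exp (-(a*(4*(p-1)/p)*pi^2*t))"
  have F0: "lp_norm p x0 = F 0 powr (1/p)"
  proof -
    have "integral {0..1} (\<lambda>z. \<bar>x0 z\<bar> powr p) = F 0"
      unfolding F_def by (rule integral_cong) (simp add: init)
    then show ?thesis by (simp add: lp_norm_def)
  qed
  have Ft: "lp_norm p (x t) = F t powr (1/p)" by (simp add: lp_norm_def F_def)
  have Fnn: "F t \<ge> 0" "F 0 \<ge> 0" unfolding F_def by (simp_all add: u_int_nonneg)
  have "F t powr (1/p) \<le> (E * F 0) powr (1/p)"
    using est[OF t] Fnn p_gt by (intro powr_mono2) (auto simp: E_def)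
  also have "\<dots> = E powr (1/p) * F 0 powr (1/p)" by (rule powr_mult)
  also have "E powr (1/p) = exp (- a * (p - 1) * (4 * pi\<^sup>2 / p\<^sup>2) * t)"
    unfolding E_def exp_powr_real using p_gt by (simp add: field_simps power2_eq_square)
  finally show "lp_norm p (x t) \<le> exp (- a * (p - 1) * (4 * pi\<^sup>2 / p\<^sup>2) * t) * lp_norm p x0"
    by (simp add: F0 Ft)
qed


end
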